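(* Let $H=(V,F)$ be a finite hypergraph, $(r_i)_{i\in V}$ positive integers, and $\boldsymbol u=\{u^\alpha_{i\to j}\}$ arbitrary matrix weights with $u^\alpha_{i\to j}\in\mathbb{C}^{r_j\times r_i}$ ($\alpha\in F$, distinct $i,j\in\alpha$). Fix norms on each $\mathbb{C}^{r_i}$, let $\|\cdot\|$ be the induced operator norms, and let $\|\boldsymbol u\|=\{\|u^\alpha_{i\to j}\|\}$ be the corresponding scalar weights. Then $$\rho(\mathcal M(\boldsymbol u))\le\rho(\mathcal M(\|\boldsymbol u\|))\le\max_{\alpha,i,j}\|u^\alpha_{i\to j}\|\,\rho(\mathcal M),$$ where $\rho$ denotes spectral radius.
   Context: Directed edges $\vec E=\{(\alpha\to i):i\in\alpha\in F\}$ with $s(\alpha\to i)=\alpha$, $t(\alpha\to i)=i$; $e'\rightharpoonup e$ means $t(e')\in s(e)$, $t(e')\ne t(e)$, $s(e')\ne s(e)$. For matrix weights $\boldsymbol v$, $\mathcal M(\boldsymbol v)$ acts on $\bigoplus_e\mathbb{C}^{r_{t(e)}}$ by $(\mathcal M(\boldsymbol v)f)(e)=\sum_{e':e'\rightharpoonup e}v^{s(e)}_{t(e')\to t(e)}f(e')$; for scalar weights (all $r_i=1$) it is a $|\vec E|\times|\vec E|$ matrix. $\mathcal M$ (the directed edge matrix) denotes $\mathcal M(\boldsymbol 1)$ with all $r_i=1$ and all weights equal to $1$. *)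

theory Defs
  imports Complex_Main
begin

text \<open>Directed edges of a hypergraph: pairs (alpha, i) standing for alpha -> i, with i in alpha in F.
  s(alpha -> i) = alpha = fst, t(alpha -> i) = i = snd.\<close>

type_synonym 'v dedge = "'v set \<times> 'v"

definition dedges :: "'v set set \<Rightarrow> 'v dedge set" where
  "dedges F = {(\<alpha>, i). \<alpha> \<in> F \<and> i \<in> \<alpha>}"

definition arc :: "'v dedge \<Rightarrow> 'v dedge \<Rightarrow> bool" where
  "arc e' e \<longleftrightarrow> snd e' \<in> fst e \<and> snd e' \<noteq> snd e \<and> fst e' \<noteq> fst e"

text \<open>C^r as functions nat => complex vanishing from index r on; an m x n matrix is a function
  nat => nat => complex (row index < m, column index < n) acting by mat_app.\<close>
definition cvec_space :: "nat \<Rightarrow> (nat \<Rightarrow> complex) set" where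
  "cvec_space r = {x. \<forall>k\<ge>r. x k = 0}"

definition mat_app :: "nat \<Rightarrow> nat \<Rightarrow> (nat \<Rightarrow> nat \<Rightarrow> complex) \<Rightarrow> (nat \<Rightarrow> complex) \<Rightarrow> (nat \<Rightarrow> complex)" where
  "mat_app m n A x = (\<lambda>k. if k < m then (\<Sum>l<n. A k l * x l) else 0)"

text \<open>The space (direct sum over directed edges e of C^{r_{t(e)}}).\<close>
definition dspace :: "'v set set \<Rightarrow> ('v \<Rightarrow> nat) \<Rightarrow> ('v dedge \<Rightarrow> nat \<Rightarrow> complex) set" where
  "dspace F r = {f. \<forall>e k. (e \<notin> dedges F \<or> r (snd e) \<le> k) \<longrightarrow> f e k = 0}"

text \<open>The operator M(v); the weight v alpha i j is the r_j x r_i matrix v^alpha_{i -> j}.\<close>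
definition M_op :: "'v set set \<Rightarrow> ('v \<Rightarrow> nat) \<Rightarrow> ('v set \<Rightarrow> 'v \<Rightarrow> 'v \<Rightarrow> nat \<Rightarrow> nat \<Rightarrow> complex)
    \<Rightarrow> ('v dedge \<Rightarrow> nat \<Rightarrow> complex) \<Rightarrow> ('v dedge \<Rightarrow> nat \<Rightarrow> complex)" where
  "M_op F r v f = (\<lambda>e k. if e \<in> dedges F then
      (\<Sum>e'\<in>{e' \<in> dedges F. arc e' e}. mat_app (r (snd e)) (r (snd e')) (v (fst e) (snd e') (snd e)) (f e') k)
    else 0)"

definition is_eigenvalue :: "('x \<Rightarrow> nat \<Rightarrow> complex) set \<Rightarrow> (('x \<Rightarrow> nat \<Rightarrow> complex) \<Rightarrow> ('x \<Rightarrow> nat \<Rightarrow> complex)) \<Rightarrow> complex \<Rightarrow> bool" where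
  "is_eigenvalue W T c \<longleftrightarrow> (\<exists>f\<in>W. f \<noteq> (\<lambda>_ _. 0) \<and> T f = (\<lambda>e k. c * f e k))"

definition spectral_radius_op :: "('x \<Rightarrow> nat \<Rightarrow> complex) set \<Rightarrow> (('x \<Rightarrow> nat \<Rightarrow> complex) \<Rightarrow> ('x \<Rightarrow> nat \<Rightarrow> complex)) \<Rightarrow> real" where
  "spectral_radius_op W T = Sup (insert 0 (cmod ` {c. is_eigenvalue W T c}))"

definition rho_M :: "'v set set \<Rightarrow> ('v \<Rightarrow> nat) \<Rightarrow> ('v set \<Rightarrow> 'v \<Rightarrow> 'v \<Rightarrow> nat \<Rightarrow> nat \<Rightarrow> complex) \<Rightarrow> real" where
  "rho_M F r v = spectral_radius_op (dspace F r) (M_op F r v)"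

definition is_cnorm :: "nat \<Rightarrow> ((nat \<Rightarrow> complex) \<Rightarrow> real) \<Rightarrow> bool" where
  "is_cnorm r N \<longleftrightarrow>
     (\<forall>x\<in>cvec_space r. 0 \<le> N x \<and> (N x = 0 \<longleftrightarrow> x = (\<lambda>_. 0))) \<and>
     (\<forall>x\<in>cvec_space r. \<forall>c. N (\<lambda>k. c * x k) = cmod c * N x) \<and>
     (\<forall>x\<in>cvec_space r. \<forall>y\<in>cvec_space r. N (\<lambda>k. x k + y k) \<le> N x + N y)"

definition op_norm :: "((nat \<Rightarrow> complex) \<Rightarrow> real) \<Rightarrow> ((nat \<Rightarrow> complex) \<Rightarrow> real) \<Rightarrow> nat \<Rightarrow> nat
    \<Rightarrow> (nat \<Rightarrow> nat \<Rightarrow> complex) \<Rightarrow> real" where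
  "op_norm Nin Nout m n A = Sup {Nout (mat_app m n A x) | x. x \<in> cvec_space n \<and> Nin x = 1}"

definition norm_weights :: "('v \<Rightarrow> (nat \<Rightarrow> complex) \<Rightarrow> real) \<Rightarrow> ('v \<Rightarrow> nat)
    \<Rightarrow> ('v set \<Rightarrow> 'v \<Rightarrow> 'v \<Rightarrow> nat \<Rightarrow> nat \<Rightarrow> complex) \<Rightarrow> ('v set \<Rightarrow> 'v \<Rightarrow> 'v \<Rightarrow> nat \<Rightarrow> nat \<Rightarrow> complex)" where
  "norm_weights N r u = (\<lambda>\<alpha> i j _ _. complex_of_real (op_norm (N i) (N j) (r j) (r i) (u \<alpha> i j)))"

end

theory Submission imports Defs "Jordan_Normal_Form.Spectral_Radius" begin

definition coef :: "('v set \<Rightarrow> 'v \<Rightarrow> 'v \<Rightarrow> nat \<Rightarrow> nat \<Rightarrow> complex) \<Rightarrow> 'v dedge \<Rightarrow> 'v dedge \<Rightarrow> complex" where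
  "coef v e e' = v (fst e) (snd e') (snd e) 0 0"

lemma M_op_1: "M_op F (\<lambda>_. 1) v f e k = (if e \<in> dedges F \<and> k = 0 then
   (\<Sum>e'\<in>{e' \<in> dedges F. arc e' e}. coef v e e' * f e' 0) else 0)"
  by (auto simp: M_op_def mat_app_def coef_def)

lemma dspace_zero: "f \<in> dspace F r \<Longrightarrow> e \<notin> dedges F \<or> r (snd e) \<le> k \<Longrightarrow> f e k = 0"
  unfolding dspace_def by blast

lemma eig_bound:
  assumes fin: "finite (dedges F)"
    and ev: "is_eigenvalue (dspace F (\<lambda>_. 1)) (M_op F (\<lambda>_. 1) v) c"
  shows "cmod c \<le> (\<Sum>e\<in>dedges F. \<Sum>e'\<in>dedges F. cmod (coef v e e'))"
proof -
  let ?E = "dedges F"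
  obtain f where f: "f \<in> dspace F (\<lambda>_. 1)" "f \<noteq> (\<lambda>_ _. 0)" "M_op F (\<lambda>_. 1) v f = (\<lambda>e k. c * f e k)"
    using ev unfolding is_eigenvalue_def by blast
  obtain e1 k1 where "f e1 k1 \<noteq> 0" using f(2) by blast
  then have "e1 \<in> ?E" "k1 = 0"
    using dspace_zero[OF f(1), of e1 k1] by (auto, presburger)
  then have e1: "e1 \<in> ?E" "f e1 0 \<noteq> 0" using \<open>f e1 k1 \<noteq> 0\<close> by auto
  define m where "m = Max ((\<lambda>e. cmod (f e 0)) ` ?E)"
  have ne: "?E \<noteq> {}" using e1 by auto
  have "m \<in> (\<lambda>e. cmod (f e 0)) ` ?E" unfolding m_def using fin ne by (intro Max_in) auto
  then obtain e0 where e0: "e0 \<in> ?E" "cmod (f e0 0) = m" by force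
  have mge: "\<And>e. e \<in> ?E \<Longrightarrow> cmod (f e 0) \<le> m" unfolding m_def using fin by auto
  have mpos: "0 < m" using mge[OF e1(1)] e1(2) by (meson norm_ge_zero norm_le_zero_iff order_le_less_trans linorder_not_le)
  have "c * f e0 0 = M_op F (\<lambda>_. 1) v f e0 0" using f(3) by metis
  also have "\<dots> = (\<Sum>e'\<in>{e' \<in> ?E. arc e' e0}. coef v e0 e' * f e' 0)"
    using e0 by (subst M_op_1) simp
  finally have eq: "c * f e0 0 = (\<Sum>e'\<in>{e' \<in> ?E. arc e' e0}. coef v e0 e' * f e' 0)" .
  have "cmod c * m = cmod (c * f e0 0)" using e0 by (simp add: norm_mult)
  also have "\<dots> \<le> (\<Sum>e'\<in>{e' \<in> ?E. arc e' e0}. cmod (coef v e0 e') * cmod (f e' 0))"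
    unfolding eq by (rule order_trans[OF norm_sum]) (simp add: norm_mult)
  also have "\<dots> \<le> (\<Sum>e'\<in>{e' \<in> ?E. arc e' e0}. cmod (coef v e0 e') * m)"
    by (rule sum_mono) (auto intro: mult_left_mono mge)
  also have "\<dots> \<le> (\<Sum>e'\<in>?E. cmod (coef v e0 e') * m)"
    by (rule sum_mono2) (use fin mpos in auto)
  also have "\<dots> = (\<Sum>e'\<in>?E. cmod (coef v e0 e')) * m" by (simp add: sum_distrib_right)
  also have "\<dots> \<le> (\<Sum>e\<in>?E. \<Sum>e'\<in>?E. cmod (coef v e e')) * m"
    apply (rule mult_right_mono)
     apply (rule member_le_sum[where f = "\<lambda>e. \<Sum>e'\<in>?E. cmod (coef v e e')"])
    using e0 fin mpos by (auto intro: sum_nonneg)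
  finally show ?thesis using mpos by simp
qed

lemma rho_facts:
  assumes fin: "finite (dedges F)"
  shows "0 \<le> rho_M F (\<lambda>_. 1) v"
    "is_eigenvalue (dspace F (\<lambda>_. 1)) (M_op F (\<lambda>_. 1) v) c \<Longrightarrow> cmod c \<le> rho_M F (\<lambda>_. 1) v"
proof -
  let ?S = "insert 0 (cmod ` {c. is_eigenvalue (dspace F (\<lambda>_. 1)) (M_op F (\<lambda>_. 1) v) c})"
  have bdd: "bdd_above ?S"
    unfolding bdd_above_def
    by (rule exI[of _ "\<Sum>e\<in>dedges F. \<Sum>e'\<in>dedges F. cmod (coef v e e')"])
      (auto intro!: sum_nonneg eig_bound[OF fin])
  show "0 \<le> rho_M F (\<lambda>_. 1) v" unfolding rho_M_def spectral_radius_op_def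
    by (rule cSup_upper[OF _ bdd]) simp
  show "is_eigenvalue (dspace F (\<lambda>_. 1)) (M_op F (\<lambda>_. 1) v) c \<Longrightarrow> cmod c \<le> rho_M F (\<lambda>_. 1) v"
    unfolding rho_M_def spectral_radius_op_def
    by (rule cSup_upper[OF _ bdd]) simp
qed

lemma KL:
  fixes g :: "'v dedge \<Rightarrow> real" and s :: real
  assumes fin: "finite (dedges F)"
    and nn: "\<forall>e\<in>dedges F. \<forall>e'\<in>dedges F. arc e' e \<longrightarrow> Im (coef v e e') = 0 \<and> 0 \<le> Re (coef v e e')"
    and g0: "\<forall>e\<in>dedges F. 0 \<le> g e" and e0: "e0 \<in> dedges F" and ge0: "0 < g e0"
    and s: "0 < s"
    and ineq: "\<forall>e\<in>dedges F. s * g e \<le> (\<Sum>e'\<in>{e'\<in>dedges F. arc e' e}. Re (coef v e e') * g e')"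
  shows "s \<le> rho_M F (\<lambda>_. 1) v"
proof (rule ccontr)
  let ?E = "dedges F"
  let ?\<rho> = "rho_M F (\<lambda>_. 1) v"
  assume "\<not> s \<le> ?\<rho>"
  hence lt: "?\<rho> < s" by simp
  have r0: "0 \<le> ?\<rho>" by (rule rho_facts(1)[OF fin])
  define t where "t = (?\<rho> + s) / 2"
  have t: "0 < t" "?\<rho> < t" "t < s" using lt r0 unfolding t_def by auto
  define n where "n = card ?E"
  obtain h where h: "bij_betw h {0..<n} ?E" using ex_bij_betw_nat_finite[OF fin] unfolding n_def by blast
  define hi where "hi = the_inv_into {0..<n} h"
  have hi1: "\<And>e. e \<in> ?E \<Longrightarrow> hi e < n \<and> h (hi e) = e"
  proof -
    fix e assume e: "e \<in> ?E"
    have inj: "inj_on h {0..<n}" and im: "h ` {0..<n} = ?E" using h by (auto simp: bij_betw_def)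
    show "hi e < n \<and> h (hi e) = e" unfolding hi_def
      using the_inv_into_into[OF inj, of e "{0..<n}"] f_the_inv_into_f[OF inj, of e] e im by auto
  qed
  have hi2: "\<And>a. a < n \<Longrightarrow> hi (h a) = a \<and> h a \<in> ?E"
    unfolding hi_def using h by (auto simp: the_inv_into_f_f bij_betw_imp_inj_on bij_betwE)
  have npos: "0 < n" using e0 fin unfolding n_def by (auto simp: card_gt_0_iff)
  define A :: "complex mat" where
    "A = mat n n (\<lambda>(a,b). if arc (h b) (h a) then coef v (h a) (h b) / t else 0)"
  have A: "A \<in> carrier_mat n n" unfolding A_def by simp
  have Asum: "(A *\<^sub>v x) $ a = (\<Sum>e'\<in>{e'\<in>?E. arc e' (h a)}. coef v (h a) e' / t * x $ hi e')"
    if a: "a < n" and x: "x \<in> carrier_vec n" for a x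
  proof -
    have "(A *\<^sub>v x) $ a = (\<Sum>b = 0..<n. A $$ (a,b) * x $ b)"
      using a x A by (simp add: scalar_prod_def)
    also have "\<dots> = (\<Sum>b = 0..<n. (\<lambda>e'. (if arc e' (h a) then coef v (h a) e' / t else 0) * x $ hi e') (h b))"
      using a hi2 by (intro sum.cong) (auto simp: A_def)
    also have "\<dots> = (\<Sum>e'\<in>?E. (if arc e' (h a) then coef v (h a) e' / t else 0) * x $ hi e')"
      by (rule sum.reindex_bij_betw[OF h])
    also have "\<dots> = (\<Sum>e'\<in>{e'\<in>?E. arc e' (h a)}. coef v (h a) e' / t * x $ hi e')"
      using fin by (subst sum.inter_filter) (auto intro: sum.cong)
    finally show ?thesis .
  qed
  have small: "cmod c < 1" if ev: "eigenvalue A c" for c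
  proof -
    obtain x where x: "x \<in> carrier_vec n" "x \<noteq> 0\<^sub>v n" "A *\<^sub>v x = c \<cdot>\<^sub>v x"
      using ev A unfolding eigenvalue_def eigenvector_def by auto
    define f where "f = (\<lambda>e (k::nat). if e \<in> ?E \<and> k = 0 then x $ hi e else 0)"
    have fd: "f \<in> dspace F (\<lambda>_. 1)" unfolding f_def dspace_def by auto
    obtain a where a: "a < n" "x $ a \<noteq> 0"
    proof -
      have "x = 0\<^sub>v n" if "\<forall>a<n. x $ a = 0" using that x(1) by (intro eq_vecI) auto
      thus ?thesis using x(2) that by auto
    qed
    have "f (h a) 0 \<noteq> 0" using a hi2 unfolding f_def by auto
    hence fnz: "f \<noteq> (\<lambda>_ _. 0)" by metis
    have "M_op F (\<lambda>_. 1) v f = (\<lambda>e k. (t * c) * f e k)"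
    proof (intro ext)
      fix e k
      show "M_op F (\<lambda>_. 1) v f e k = (t * c) * f e k"
      proof (cases "e \<in> ?E \<and> k = 0")
        case True
        have "M_op F (\<lambda>_. 1) v f e k = (\<Sum>e'\<in>{e'\<in>?E. arc e' e}. coef v e e' * x $ hi e')"
          using True by (subst M_op_1) (auto simp: f_def intro: sum.cong)
        also have "\<dots> = t * (\<Sum>e'\<in>{e'\<in>?E. arc e' e}. coef v e e' / t * x $ hi e')"
          using t by (simp add: sum_distrib_left)
        also have "\<dots> = t * (A *\<^sub>v x) $ hi e"
          using Asum[of "hi e" x] hi1[of e] True x by simp
        also have "\<dots> = t * c * f e k" using x hi1[of e] True by (simp add: f_def)
        finally show ?thesis .
      qed (subst M_op_1, auto simp: f_def)
    qed
    hence "is_eigenvalue (dspace F (\<lambda>_. 1)) (M_op F (\<lambda>_. 1) v) (t * c)"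
      unfolding is_eigenvalue_def using fd fnz by blast
    from rho_facts(2)[OF fin this] have "t * cmod c \<le> ?\<rho>" using t by (simp add: norm_mult)
    with t have "t * cmod c < t * 1" by linarith
    thus ?thesis using t(1) by (simp only: mult_less_cancel_left_pos)
  qed
  have sr: "spectral_radius A < 1"
    using spectral_radius_mem_max(1)[OF A npos] small unfolding spectrum_def by auto
  obtain as where "char_poly A = (\<Prod>a\<leftarrow>as. [:- a, 1:])" using char_poly_factorized[OF A] by auto
  from jordan_nf_exists[OF A this] spectral_radius_jnf_norm_bound_less_1[OF A sr]
  obtain C where C: "\<And>k. norm_bound (A ^\<^sub>m k) C" by blast
  define q where "q = s / t"
  have q: "1 < q" using t unfolding q_def by simp
  have step: "\<forall>a<n. Im ((A *\<^sub>v w) $ a) = 0 \<and> c * q * g (h a) \<le> Re ((A *\<^sub>v w) $ a)"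
    if w: "w \<in> carrier_vec n" and c: "0 \<le> c" and wp: "\<forall>a<n. Im (w $ a) = 0 \<and> c * g (h a) \<le> Re (w $ a)" for w c
  proof (intro allI impI)
    fix a assume a: "a < n"
    let ?F = "{e'\<in>?E. arc e' (h a)}"
    have ha: "h a \<in> ?E" using hi2[OF a] by simp
    have terms: "Im (coef v (h a) e' / t * w $ hi e') = 0 \<and>
        Re (coef v (h a) e' / t * w $ hi e') = Re (coef v (h a) e') / t * Re (w $ hi e') \<and>
        Re (coef v (h a) e') / t * (c * g e') \<le> Re (coef v (h a) e') / t * Re (w $ hi e')" if e': "e' \<in> ?F" for e'
    proof -
      have e'E: "e' \<in> ?E" "arc e' (h a)" using e' by auto
      have nn': "Im (coef v (h a) e') = 0" "0 \<le> Re (coef v (h a) e')" using nn ha e'E by auto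
      have wi: "Im (w $ hi e') = 0" "c * g (h (hi e')) \<le> Re (w $ hi e')" using wp hi1[OF e'E(1)] by auto
      have "c * g e' \<le> Re (w $ hi e')" using wi hi1[OF e'E(1)] by simp
      moreover have "0 \<le> Re (coef v (h a) e') / t" using nn' t by simp
      ultimately have mono: "Re (coef v (h a) e') / t * (c * g e') \<le> Re (coef v (h a) e') / t * Re (w $ hi e')"
        by (intro mult_left_mono)
      show ?thesis using mono nn' wi(1) t by simp
    qed
    have eq: "(A *\<^sub>v w) $ a = (\<Sum>e'\<in>?F. coef v (h a) e' / t * w $ hi e')" by (rule Asum[OF a w])
    show "Im ((A *\<^sub>v w) $ a) = 0 \<and> c * q * g (h a) \<le> Re ((A *\<^sub>v w) $ a)"
    proof
      show "Im ((A *\<^sub>v w) $ a) = 0" unfolding eq Im_sum by (rule sum.neutral) (use terms in blast)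
      have "c * q * g (h a) = c / t * (s * g (h a))" unfolding q_def by simp
      also have "\<dots> \<le> c / t * (\<Sum>e'\<in>?F. Re (coef v (h a) e') * g e')"
        using ineq ha c t by (intro mult_left_mono) auto
      also have "\<dots> = (\<Sum>e'\<in>?F. Re (coef v (h a) e') / t * (c * g e'))"
        by (simp add: sum_distrib_left algebra_simps)
      also have "\<dots> \<le> (\<Sum>e'\<in>?F. Re (coef v (h a) e') / t * Re (w $ hi e'))"
        using terms by (intro sum_mono) auto
      also have "\<dots> = Re ((A *\<^sub>v w) $ a)" unfolding eq Re_sum by (rule sum.cong[OF refl]) (use terms in auto)
      finally show "c * q * g (h a) \<le> Re ((A *\<^sub>v w) $ a)" .
    qed
  qed
  have grow: "\<forall>a<n. Im ((A ^\<^sub>m k *\<^sub>v w) $ a) = 0 \<and> c * q ^ k * g (h a) \<le> Re ((A ^\<^sub>m k *\<^sub>v w) $ a)"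
    if "w \<in> carrier_vec n" "0 \<le> c" "\<forall>a<n. Im (w $ a) = 0 \<and> c * g (h a) \<le> Re (w $ a)" for k w c
    using that
  proof (induction k arbitrary: w c)
    case 0
    have "dim_row A = n" using A by simp
    then show ?case using 0 by simp
  next
    case (Suc k)
    have Aw: "A *\<^sub>v w \<in> carrier_vec n" using A Suc.prems(1) by simp
    have cq: "0 \<le> c * q" using Suc.prems(2) q by simp
    have "A ^\<^sub>m Suc k *\<^sub>v w = A ^\<^sub>m k *\<^sub>v (A *\<^sub>v w)"
      using A Suc.prems(1) by (simp add: assoc_mult_mat_vec[of _ n n _ n])
    moreover have "\<forall>a<n. Im ((A ^\<^sub>m k *\<^sub>v (A *\<^sub>v w)) $ a) = 0 \<and> (c * q) * q ^ k * g (h a) \<le> Re ((A ^\<^sub>m k *\<^sub>v (A *\<^sub>v w)) $ a)"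
      by (rule Suc.IH[OF Aw cq step[OF Suc.prems]])
    ultimately show ?case by (simp add: mult.assoc mult.left_commute)
  qed
  define gv where "gv = vec n (\<lambda>a. complex_of_real (g (h a)))"
  have gv: "gv \<in> carrier_vec n" "\<forall>a<n. Im (gv $ a) = 0 \<and> 1 * g (h a) \<le> Re (gv $ a)"
    unfolding gv_def by auto
  define G where "G = (\<Sum>b = 0..<n. g (h b))"
  define a0 where "a0 = hi e0"
  have a0: "a0 < n" "h a0 = e0" using hi1[OF e0] unfolding a0_def by auto
  have C0: "0 \<le> C" using C[of 0] npos unfolding norm_bound_def
    by (metis A carrier_matD(1,2) norm_ge_zero order_trans pow_carrier_mat)
  obtain k where k: "C * G / g e0 < q ^ k" using real_arch_pow[OF q] by blast
  have "q ^ k * g e0 \<le> Re ((A ^\<^sub>m k *\<^sub>v gv) $ a0)"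
    using grow[OF gv(1) _ gv(2), of k] a0 by auto
  also have "\<dots> \<le> cmod ((A ^\<^sub>m k *\<^sub>v gv) $ a0)" by (rule complex_Re_le_cmod)
  also have "(A ^\<^sub>m k *\<^sub>v gv) $ a0 = (\<Sum>b = 0..<n. (A ^\<^sub>m k) $$ (a0, b) * gv $ b)"
  proof -
    have d: "dim_row (A ^\<^sub>m k) = n" "dim_col (A ^\<^sub>m k) = n" "dim_vec gv = n"
      using pow_carrier_mat[OF A, of k] gv(1) by auto
    show ?thesis using a0 d by (simp add: scalar_prod_def)
  qed
  also have "cmod \<dots> \<le> (\<Sum>b = 0..<n. cmod ((A ^\<^sub>m k) $$ (a0, b)) * cmod (gv $ b))"
    by (rule order_trans[OF norm_sum]) (simp add: norm_mult)
  also have "\<dots> \<le> (\<Sum>b = 0..<n. C * g (h b))"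
  proof (rule sum_mono)
    fix b assume b: "b \<in> {0..<n}"
    have d: "dim_row (A ^\<^sub>m k) = n" "dim_col (A ^\<^sub>m k) = n"
      using pow_carrier_mat[OF A, of k] by auto
    have "cmod ((A ^\<^sub>m k) $$ (a0, b)) \<le> C" using C[of k] a0 b d
      unfolding norm_bound_def by (simp only:) auto
    moreover have "cmod (gv $ b) = g (h b)" using b g0 hi2[of b] unfolding gv_def by auto
    moreover have "0 \<le> g (h b)" using b g0 hi2[of b] by auto
    ultimately show "cmod ((A ^\<^sub>m k) $$ (a0, b)) * cmod (gv $ b) \<le> C * g (h b)"
      by (simp add: mult_right_mono)
  qed
  also have "\<dots> = C * G" unfolding G_def by (simp add: sum_distrib_left)
  finally have "q ^ k * g e0 \<le> C * G" .
  moreover have "C * G < q ^ k * g e0" using k ge0 by (simp add: pos_divide_less_eq)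
  ultimately show False by simp
qed

lemma dspace1_nz: "f \<in> dspace F (\<lambda>_. 1) \<Longrightarrow> f \<noteq> (\<lambda>_ _. 0) \<Longrightarrow> \<exists>e\<in>dedges F. f e 0 \<noteq> 0"
proof -
  assume f: "f \<in> dspace F (\<lambda>_. 1)" "f \<noteq> (\<lambda>_ _. 0)"
  obtain e1 k1 where nz: "f e1 k1 \<noteq> 0" using f(2) by blast
  then have "e1 \<in> dedges F" "k1 = 0"
    using dspace_zero[OF f(1), of e1 k1] by (auto, presburger)
  then show ?thesis using nz by auto
qed

lemma partC:
  assumes fin: "finite (dedges F)"
    and w: "\<forall>e\<in>dedges F. \<forall>e'\<in>dedges F. arc e' e \<longrightarrow> Im (coef v e e') = 0 \<and> 0 \<le> Re (coef v e e') \<and> Re (coef v e e') \<le> W"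
    and W: "0 \<le> W"
  shows "rho_M F (\<lambda>_. 1) v \<le> W * rho_M F (\<lambda>_. 1) (\<lambda>_ _ _ _ _. 1)"
proof -
  let ?E = "dedges F"
  let ?one = "(\<lambda>_ _ _ _ _. 1) :: 'a set \<Rightarrow> 'a \<Rightarrow> 'a \<Rightarrow> nat \<Rightarrow> nat \<Rightarrow> complex"
  have r1: "0 \<le> rho_M F (\<lambda>_. 1) ?one" by (rule rho_facts(1)[OF fin])
  show ?thesis unfolding rho_M_def[of F "\<lambda>_. 1" v] spectral_radius_op_def
  proof (rule cSup_least)
    fix x assume "x \<in> insert 0 (cmod ` {c. is_eigenvalue (dspace F (\<lambda>_. 1)) (M_op F (\<lambda>_. 1) v) c})"
    then consider "x = 0" | c where "x = cmod c" "is_eigenvalue (dspace F (\<lambda>_. 1)) (M_op F (\<lambda>_. 1) v) c"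
      by auto
    then show "x \<le> W * rho_M F (\<lambda>_. 1) ?one"
    proof cases
      case 1 then show ?thesis using W r1 by simp
    next
      case 2
      obtain f where f: "f \<in> dspace F (\<lambda>_. 1)" "f \<noteq> (\<lambda>_ _. 0)" "M_op F (\<lambda>_. 1) v f = (\<lambda>e k. c * f e k)"
        using 2(2) unfolding is_eigenvalue_def by blast
      obtain e0 where e0: "e0 \<in> ?E" "f e0 0 \<noteq> 0" using dspace1_nz[OF f(1,2)] by blast
      define g where "g = (\<lambda>e. cmod (f e 0))"
      have ineq: "cmod c * g e \<le> W * (\<Sum>e'\<in>{e'\<in>?E. arc e' e}. g e')" if e: "e \<in> ?E" for e
      proof -
        have "c * f e 0 = M_op F (\<lambda>_. 1) v f e 0" using f(3) by metis
        also have "\<dots> = (\<Sum>e'\<in>{e' \<in> ?E. arc e' e}. coef v e e' * f e' 0)"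
          using e by (subst M_op_1) simp
        finally have eq: "c * f e 0 = (\<Sum>e'\<in>{e' \<in> ?E. arc e' e}. coef v e e' * f e' 0)" .
        have "cmod c * g e = cmod (c * f e 0)" by (simp add: g_def norm_mult)
        also have "\<dots> \<le> (\<Sum>e'\<in>{e' \<in> ?E. arc e' e}. cmod (coef v e e') * g e')"
          unfolding eq g_def by (rule order_trans[OF norm_sum]) (simp add: norm_mult)
        also have "\<dots> \<le> (\<Sum>e'\<in>{e' \<in> ?E. arc e' e}. W * g e')"
        proof (rule sum_mono)
          fix e' assume e': "e' \<in> {e' \<in> ?E. arc e' e}"
          have "cmod (coef v e e') = Re (coef v e e')" using w e e' by (simp add: cmod_eq_Re)
          also have "\<dots> \<le> W" using w e e' by auto
          finally show "cmod (coef v e e') * g e' \<le> W * g e'" by (simp add: g_def mult_right_mono)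
        qed
        finally show ?thesis by (simp add: sum_distrib_left)
      qed
      show ?thesis
      proof (cases "c = 0")
        case True then show ?thesis using 2 W r1 by simp
      next
        case False
        have Wpos: "0 < W"
        proof (rule ccontr)
          assume "\<not> 0 < W" hence "W = 0" using W by simp
          with ineq[OF e0(1)] have "cmod c * g e0 \<le> 0" by simp
          moreover have "0 < cmod c * g e0" using False e0 by (simp add: g_def)
          ultimately show False by simp
        qed
        have "cmod c / W \<le> rho_M F (\<lambda>_. 1) ?one"
        proof (rule KL[OF fin, where g = g])
          show "\<forall>e\<in>?E. \<forall>e'\<in>?E. arc e' e \<longrightarrow> Im (coef ?one e e') = 0 \<and> 0 \<le> Re (coef ?one e e')"
            by (simp add: coef_def)
          show "\<forall>e\<in>?E. 0 \<le> g e" by (simp add: g_def)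
          show "e0 \<in> ?E" by fact
          show "0 < g e0" using e0 by (simp add: g_def)
          show "0 < cmod c / W" using False Wpos by simp
          show "\<forall>e\<in>?E. cmod c / W * g e \<le> (\<Sum>e'\<in>{e'\<in>?E. arc e' e}. Re (coef ?one e e') * g e')"
          proof
            fix e assume e: "e \<in> ?E"
            have "cmod c / W * g e = (cmod c * g e) / W" by simp
            also have "\<dots> \<le> (W * (\<Sum>e'\<in>{e'\<in>?E. arc e' e}. g e')) / W"
              using ineq[OF e] Wpos by (intro divide_right_mono) auto
            also have "\<dots> = (\<Sum>e'\<in>{e'\<in>?E. arc e' e}. Re (coef ?one e e') * g e')"
              using Wpos by (simp add: coef_def)
            finally show "cmod c / W * g e \<le> (\<Sum>e'\<in>{e'\<in>?E. arc e' e}. Re (coef ?one e e') * g e')" .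
          qed
        qed
        then show ?thesis using Wpos 2(1) by (simp add: divide_le_eq mult.commute)
      qed
    qed
  qed simp
qed



lemma cvec_zero: "(\<lambda>_. 0) \<in> cvec_space r" by (simp add: cvec_space_def)
lemma cvec_add: "x \<in> cvec_space r \<Longrightarrow> y \<in> cvec_space r \<Longrightarrow> (\<lambda>k. x k + y k) \<in> cvec_space r"
  by (simp add: cvec_space_def)
lemma cvec_diff: "x \<in> cvec_space r \<Longrightarrow> y \<in> cvec_space r \<Longrightarrow> (\<lambda>k. x k - y k) \<in> cvec_space r"
  by (simp add: cvec_space_def)
lemma cvec_scale: "x \<in> cvec_space r \<Longrightarrow> (\<lambda>k. c * x k) \<in> cvec_space r"
  by (simp add: cvec_space_def)
lemma cvec_sum: "(\<And>i. i \<in> I \<Longrightarrow> x i \<in> cvec_space r) \<Longrightarrow> (\<lambda>k. \<Sum>i\<in>I. x i k) \<in> cvec_space r"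
  by (simp add: cvec_space_def)

lemma cnorm_nonneg: "is_cnorm r N \<Longrightarrow> x \<in> cvec_space r \<Longrightarrow> 0 \<le> N x"
  unfolding is_cnorm_def by blast
lemma cnorm_zero_iff: "is_cnorm r N \<Longrightarrow> x \<in> cvec_space r \<Longrightarrow> N x = 0 \<longleftrightarrow> x = (\<lambda>_. 0)"
  unfolding is_cnorm_def by blast
lemma cnorm_scale: "is_cnorm r N \<Longrightarrow> x \<in> cvec_space r \<Longrightarrow> N (\<lambda>k. c * x k) = cmod c * N x"
  unfolding is_cnorm_def by blast
lemma cnorm_tri: "is_cnorm r N \<Longrightarrow> x \<in> cvec_space r \<Longrightarrow> y \<in> cvec_space r \<Longrightarrow> N (\<lambda>k. x k + y k) \<le> N x + N y"
  unfolding is_cnorm_def by blast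
lemma cnorm_0: "is_cnorm r N \<Longrightarrow> N (\<lambda>_. 0) = 0"
  using cnorm_zero_iff[OF _ cvec_zero] by blast

lemma cnorm_sum:
  assumes N: "is_cnorm r N" and fin: "finite I" and x: "\<And>i. i \<in> I \<Longrightarrow> x i \<in> cvec_space r"
  shows "N (\<lambda>k. \<Sum>i\<in>I. x i k) \<le> (\<Sum>i\<in>I. N (x i))"
  using fin x
proof (induction I rule: finite_induct)
  case empty then show ?case using cnorm_0[OF N] by simp
next
  case (insert a I)
  have "N (\<lambda>k. \<Sum>i\<in>insert a I. x i k) = N (\<lambda>k. x a k + (\<Sum>i\<in>I. x i k))"
    using insert by simp
  also have "\<dots> \<le> N (x a) + N (\<lambda>k. \<Sum>i\<in>I. x i k)"
    by (rule cnorm_tri[OF N]) (use insert in \<open>auto intro: cvec_sum\<close>)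
  also have "\<dots> \<le> N (x a) + (\<Sum>i\<in>I. N (x i))" using insert by simp
  finally show ?case using insert by simp
qed

definition delta :: "nat \<Rightarrow> nat \<Rightarrow> complex" where "delta l = (\<lambda>k. if k = l then 1 else 0)"

definition S1n :: "nat \<Rightarrow> (nat \<Rightarrow> complex) \<Rightarrow> real" where "S1n r x = (\<Sum>l<r. cmod (x l))"

lemma delta_cvec: "l < r \<Longrightarrow> delta l \<in> cvec_space r" by (simp add: delta_def cvec_space_def)

lemma cvec_decomp: "x \<in> cvec_space r \<Longrightarrow> x = (\<lambda>k. \<Sum>l<r. x l * delta l k)"
proof (rule ext)
  fix k assume x: "x \<in> cvec_space r"
  have "(\<Sum>l<r. x l * delta l k) = (\<Sum>l<r. if l = k then x l else 0)"
    by (intro sum.cong) (auto simp: delta_def)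
  also have "\<dots> = (if k \<in> {..<r} then x k else 0)" by (rule sum.delta) simp
  also have "\<dots> = x k" using x by (auto simp: cvec_space_def)
  finally show "x k = (\<Sum>l<r. x l * delta l k)" by simp
qed

lemma cnorm_upper:
  assumes N: "is_cnorm r N" and x: "x \<in> cvec_space r"
  shows "N x \<le> (\<Sum>l<r. N (delta l)) * S1n r x"
proof -
  have "N x = N (\<lambda>k. \<Sum>l<r. x l * delta l k)" using cvec_decomp[OF x] by metis
  also have "\<dots> \<le> (\<Sum>l<r. N (\<lambda>k. x l * delta l k))"
    by (rule cnorm_sum[OF N]) (auto intro: cvec_scale delta_cvec)
  also have "\<dots> = (\<Sum>l<r. cmod (x l) * N (delta l))"
    by (intro sum.cong refl cnorm_scale[OF N] delta_cvec) auto
  also have "\<dots> \<le> (\<Sum>l<r. cmod (x l) * (\<Sum>l<r. N (delta l)))"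
  proof (intro sum_mono mult_left_mono)
    fix l assume l: "l \<in> {..<r}"
    show "N (delta l) \<le> (\<Sum>l<r. N (delta l))"
      by (rule member_le_sum) (use l N in \<open>auto intro: cnorm_nonneg delta_cvec\<close>)
  qed simp
  also have "\<dots> = (\<Sum>l<r. N (delta l)) * S1n r x" unfolding S1n_def sum_distrib_right[symmetric] by (rule mult.commute)
  finally show ?thesis .
qed

lemma conv_complexI:
  fixes f :: "nat \<Rightarrow> complex"
  assumes "convergent (\<lambda>j. Re (f j))" "convergent (\<lambda>j. Im (f j))"
  shows "convergent f"
proof -
  from assms obtain a b where "(\<lambda>j. Re (f j)) \<longlonglongrightarrow> a" "(\<lambda>j. Im (f j)) \<longlonglongrightarrow> b"
    unfolding convergent_def by blast
  hence "f \<longlonglongrightarrow> Complex a b" by (simp add: tendsto_complex_iff)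
  thus ?thesis unfolding convergent_def by blast
qed

lemma real_subseq:
  fixes R :: "nat \<Rightarrow> real"
  assumes "\<And>j. \<bar>R j\<bar> \<le> B"
  shows "\<exists>\<tau>. strict_mono \<tau> \<and> convergent (\<lambda>j. R (\<tau> j))"
proof -
  obtain \<tau> where t: "strict_mono \<tau>" "monoseq (\<lambda>j. R (\<tau> j))" using seq_monosub by blast
  have "Bseq (\<lambda>j. R (\<tau> j))" by (rule BseqI'[where K = B]) (use assms in simp)
  with t show ?thesis using Bseq_monoseq_convergent by blast
qed

lemma subseq_conv:
  fixes Y :: "nat \<Rightarrow> nat \<Rightarrow> complex"
  assumes B: "\<And>j l. cmod (Y j l) \<le> B"
  shows "\<exists>\<sigma>. strict_mono \<sigma> \<and> (\<forall>l<r. convergent (\<lambda>j. Y (\<sigma> j) l))"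
proof (induction r)
  case 0
  show ?case by (rule exI[of _ "\<lambda>j. j"]) (simp add: strict_mono_def)
next
  case (Suc r)
  then obtain \<sigma> where s: "strict_mono \<sigma>" "\<forall>l<r. convergent (\<lambda>j. Y (\<sigma> j) l)" by blast
  obtain \<tau>1 where t1: "strict_mono \<tau>1" "convergent (\<lambda>j. Re (Y (\<sigma> (\<tau>1 j)) r))"
    using real_subseq[of "\<lambda>j. Re (Y (\<sigma> j) r)" B] B abs_Re_le_cmod order_trans by blast
  obtain \<tau>2 where t2: "strict_mono \<tau>2" "convergent (\<lambda>j. Im (Y (\<sigma> (\<tau>1 (\<tau>2 j))) r))"
    using real_subseq[of "\<lambda>j. Im (Y (\<sigma> (\<tau>1 j)) r)" B] B abs_Im_le_cmod order_trans by blast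
  define \<sigma>' where "\<sigma>' = \<sigma> \<circ> \<tau>1 \<circ> \<tau>2"
  have sm: "strict_mono \<sigma>'" unfolding \<sigma>'_def using s(1) t1(1) t2(1) by (intro strict_mono_o)
  have "convergent (\<lambda>j. Y (\<sigma>' j) l)" if l: "l < Suc r" for l
  proof (cases "l < r")
    case True
    have "convergent ((\<lambda>j. Y (\<sigma> j) l) \<circ> (\<tau>1 \<circ> \<tau>2))"
      using s(2) True t1(1) t2(1) by (intro convergent_subseq_convergent strict_mono_o) auto
    thus ?thesis unfolding \<sigma>'_def by (simp add: comp_def)
  next
    case False
    hence lr: "l = r" using l by simp
    have "convergent ((\<lambda>j. Re (Y (\<sigma> (\<tau>1 j)) r)) \<circ> \<tau>2)"
      using t1(2) t2(1) by (rule convergent_subseq_convergent)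
    moreover have "convergent (\<lambda>j. Im (Y (\<sigma> (\<tau>1 (\<tau>2 j))) r))" by (rule t2(2))
    ultimately show ?thesis unfolding \<sigma>'_def lr by (intro conv_complexI) (simp_all add: comp_def)
  qed
  with sm show ?case by blast
qed

lemma S1n_scale: "S1n r (\<lambda>k. c * x k) = cmod c * S1n r x"
  by (simp add: S1n_def norm_mult sum_distrib_left)

lemma S1n_nonneg: "0 \<le> S1n r x" by (simp add: S1n_def sum_nonneg)

lemma cnorm_lower:
  assumes N: "is_cnorm r N"
  shows "\<exists>m>0. \<forall>x\<in>cvec_space r. m * S1n r x \<le> N x"
proof (rule ccontr)
  assume neg: "\<not> ?thesis"
  have "\<forall>j. \<exists>y. y \<in> cvec_space r \<and> S1n r y = 1 \<and> N y < inverse (real (Suc j))"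
  proof
    fix j
    define m where "m = inverse (real (Suc j))"
    have m: "0 < m" unfolding m_def by simp
    with neg obtain x where x: "x \<in> cvec_space r" "N x < m * S1n r x" by (meson not_le)
    have "0 < m * S1n r x" using x(2) cnorm_nonneg[OF N x(1)] by linarith
    hence Sx: "0 < S1n r x" using m by (simp add: zero_less_mult_iff)
    define y where "y = (\<lambda>k. complex_of_real (1 / S1n r x) * x k)"
    have "y \<in> cvec_space r" unfolding y_def by (rule cvec_scale[OF x(1)])
    moreover have "S1n r y = 1" unfolding y_def S1n_scale using Sx by (simp add: norm_divide)
    moreover have "N y = N x / S1n r x" unfolding y_def cnorm_scale[OF N x(1)] using Sx by (simp add: norm_divide)
    moreover have "N x / S1n r x < m" using x(2) Sx by (simp add: divide_less_eq)
    ultimately show "\<exists>y. y \<in> cvec_space r \<and> S1n r y = 1 \<and> N y < inverse (real (Suc j))"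
      unfolding m_def by auto
  qed
  then obtain X where X0: "\<forall>j. X j \<in> cvec_space r \<and> S1n r (X j) = 1 \<and> N (X j) < inverse (real (Suc j))"
    by (metis choice)
  hence X: "\<And>j. X j \<in> cvec_space r" "\<And>j. S1n r (X j) = 1"
    "\<And>j. N (X j) < inverse (real (Suc j))" by auto
  have Xb: "cmod (X j l) \<le> 1" for j l
  proof (cases "l < r")
    case True
    have "cmod (X j l) \<le> S1n r (X j)" unfolding S1n_def
      by (rule member_le_sum[where f = "\<lambda>l. cmod (X j l)"]) (use True in auto)
    thus ?thesis using X(2) by simp
  next
    case False thus ?thesis using X(1)[of j] by (simp add: cvec_space_def)
  qed
  obtain \<sigma> where s: "strict_mono \<sigma>" "\<forall>l<r. convergent (\<lambda>j. X (\<sigma> j) l)"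
    using subseq_conv[of X 1 r] Xb by blast
  define L where "L = (\<lambda>l. if l < r then lim (\<lambda>j. X (\<sigma> j) l) else 0)"
  have Lc: "L \<in> cvec_space r" unfolding L_def cvec_space_def by simp
  have conv: "(\<lambda>j. X (\<sigma> j) l) \<longlonglongrightarrow> L l" if "l < r" for l
    using s(2) that unfolding L_def by (simp add: convergent_LIMSEQ_iff)
  have "(\<lambda>j. S1n r (X (\<sigma> j))) \<longlonglongrightarrow> S1n r L"
    unfolding S1n_def by (intro tendsto_sum tendsto_norm conv) simp
  moreover have "(\<lambda>j. S1n r (X (\<sigma> j))) \<longlonglongrightarrow> 1" using X(2) by simp
  ultimately have SL: "S1n r L = 1" using LIMSEQ_unique by blast
  have "L \<noteq> (\<lambda>_. 0)" using SL by (auto simp: S1n_def)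
  hence NLpos: "0 < N L" using cnorm_zero_iff[OF N Lc] cnorm_nonneg[OF N Lc] by auto
  define K where "K = (\<Sum>l<r. N (delta l))"
  have bnd: "N L \<le> inverse (real (Suc (\<sigma> j))) + K * S1n r (\<lambda>k. L k - X (\<sigma> j) k)" for j
  proof -
    have "N L = N (\<lambda>k. X (\<sigma> j) k + (L k - X (\<sigma> j) k))" by simp
    also have "\<dots> \<le> N (X (\<sigma> j)) + N (\<lambda>k. L k - X (\<sigma> j) k)"
      by (rule cnorm_tri[OF N X(1) cvec_diff[OF Lc X(1)]])
    also have "\<dots> \<le> inverse (real (Suc (\<sigma> j))) + K * S1n r (\<lambda>k. L k - X (\<sigma> j) k)"
      using X(3)[of "\<sigma> j"] cnorm_upper[OF N cvec_diff[OF Lc X(1)], of "\<sigma> j"] unfolding K_def by simp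
    finally show ?thesis .
  qed
  have t1: "(\<lambda>j. inverse (real (Suc (\<sigma> j)))) \<longlonglongrightarrow> 0"
    using LIMSEQ_subseq_LIMSEQ[OF LIMSEQ_inverse_real_of_nat s(1)] by (simp add: comp_def)
  have t2: "(\<lambda>j. S1n r (\<lambda>k. L k - X (\<sigma> j) k)) \<longlonglongrightarrow> 0"
  proof -
    have "(\<lambda>j. \<Sum>l<r. cmod (L l - X (\<sigma> j) l)) \<longlonglongrightarrow> (\<Sum>l<r. cmod (L l - L l))"
      by (intro tendsto_sum tendsto_norm tendsto_diff tendsto_const conv) simp
    thus ?thesis by (simp add: S1n_def)
  qed
  have "(\<lambda>j. inverse (real (Suc (\<sigma> j))) + K * S1n r (\<lambda>k. L k - X (\<sigma> j) k)) \<longlonglongrightarrow> 0 + K * 0"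
    by (intro tendsto_add tendsto_mult tendsto_const t1 t2)
  hence "N L \<le> 0 + K * 0"
    by (rule tendsto_le[OF trivial_limit_sequentially _ tendsto_const]) (use bnd in simp)
  with NLpos show False by simp
qed

lemma mat_app_cvec: "mat_app m n A x \<in> cvec_space m" by (simp add: mat_app_def cvec_space_def)

lemma mat_app_scale: "mat_app m n A (\<lambda>k. c * x k) = (\<lambda>k. c * mat_app m n A x k)"
  by (auto simp: mat_app_def sum_distrib_left mult.left_commute fun_eq_iff)

lemma mat_app_S1n: "x \<in> cvec_space n \<Longrightarrow> S1n m (mat_app m n A x) \<le> (\<Sum>k<m. \<Sum>l<n. cmod (A k l)) * S1n n x"
proof -
  assume x: "x \<in> cvec_space n"
  have "S1n m (mat_app m n A x) = (\<Sum>k<m. cmod (\<Sum>l<n. A k l * x l))" by (simp add: S1n_def mat_app_def)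
  also have "\<dots> \<le> (\<Sum>k<m. \<Sum>l<n. cmod (A k l) * S1n n x)"
  proof (intro sum_mono)
    fix k
    have "cmod (\<Sum>l<n. A k l * x l) \<le> (\<Sum>l<n. cmod (A k l) * cmod (x l))"
      by (rule order_trans[OF norm_sum]) (simp add: norm_mult)
    also have "\<dots> \<le> (\<Sum>l<n. cmod (A k l) * S1n n x)"
    proof (intro sum_mono mult_left_mono)
      fix l assume "l \<in> {..<n}"
      thus "cmod (x l) \<le> S1n n x" unfolding S1n_def
        by (intro member_le_sum[where f = "\<lambda>l. cmod (x l)"]) auto
    qed simp
    finally show "cmod (\<Sum>l<n. A k l * x l) \<le> (\<Sum>l<n. cmod (A k l) * S1n n x)" .
  qed
  also have "\<dots> = (\<Sum>k<m. \<Sum>l<n. cmod (A k l)) * S1n n x" by (simp add: sum_distrib_right)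
  finally show ?thesis .
qed

lemma op_norm_props:
  assumes Nin: "is_cnorm n Nin" and Nout: "is_cnorm m Nout"
  shows "x \<in> cvec_space n \<Longrightarrow> Nout (mat_app m n A x) \<le> op_norm Nin Nout m n A * Nin x"
    and "0 < n \<Longrightarrow> 0 \<le> op_norm Nin Nout m n A"
proof -
  obtain mlo where mlo: "0 < mlo" "\<And>x. x \<in> cvec_space n \<Longrightarrow> mlo * S1n n x \<le> Nin x"
    using cnorm_lower[OF Nin] by blast
  define Ku where "Ku = (\<Sum>k<m. Nout (delta k))"
  define SA where "SA = (\<Sum>k<m. \<Sum>l<n. cmod (A k l))"
  have Ku: "0 \<le> Ku" unfolding Ku_def by (auto intro!: sum_nonneg cnorm_nonneg[OF Nout] delta_cvec)
  have SA: "0 \<le> SA" unfolding SA_def by (auto intro!: sum_nonneg)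
  define T where "T = {Nout (mat_app m n A y) | y. y \<in> cvec_space n \<and> Nin y = 1}"
  have opT: "op_norm Nin Nout m n A = Sup T" unfolding op_norm_def T_def ..
  have bdd: "bdd_above T" unfolding bdd_above_def
  proof (intro exI ballI)
    fix z assume "z \<in> T"
    then obtain y where y: "y \<in> cvec_space n" "Nin y = 1" "z = Nout (mat_app m n A y)" unfolding T_def by blast
    have "z \<le> Ku * S1n m (mat_app m n A y)" unfolding y(3) Ku_def by (rule cnorm_upper[OF Nout mat_app_cvec])
    also have "\<dots> \<le> Ku * (SA * S1n n y)" unfolding SA_def by (intro mult_left_mono mat_app_S1n y(1) Ku)
    also have "\<dots> \<le> Ku * (SA * (1 / mlo))"
    proof (intro mult_left_mono Ku SA)
      show "S1n n y \<le> 1 / mlo" using mlo(2)[OF y(1)] y(2) mlo(1) by (simp add: le_divide_eq mult.commute)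
    qed
    finally show "z \<le> Ku * (SA * (1 / mlo))" .
  qed
  show "Nout (mat_app m n A x) \<le> op_norm Nin Nout m n A * Nin x" if x: "x \<in> cvec_space n"
  proof (cases "x = (\<lambda>_. 0)")
    case True
    have "mat_app m n A x = (\<lambda>_. 0)" by (rule ext) (simp add: mat_app_def True)
    then show ?thesis using True cnorm_0[OF Nout] cnorm_0[OF Nin] by simp
  next
    case False
    have Nx: "0 < Nin x" using cnorm_zero_iff[OF Nin x] cnorm_nonneg[OF Nin x] False by auto
    define y where "y = (\<lambda>k. complex_of_real (1 / Nin x) * x k)"
    have y1: "y \<in> cvec_space n" unfolding y_def by (rule cvec_scale[OF x])
    have "Nin y = cmod (complex_of_real (1 / Nin x)) * Nin x" unfolding y_def by (rule cnorm_scale[OF Nin x])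
    hence y: "y \<in> cvec_space n" "Nin y = 1" using y1 Nx by (auto simp: norm_divide)
    have "Nout (mat_app m n A y) = Nout (mat_app m n A x) / Nin x"
      unfolding y_def mat_app_scale cnorm_scale[OF Nout mat_app_cvec] using Nx by (simp add: norm_divide)
    moreover have "Nout (mat_app m n A y) \<le> Sup T"
      by (rule cSup_upper[OF _ bdd]) (use y in \<open>auto simp: T_def\<close>)
    ultimately show ?thesis unfolding opT using Nx by (simp add: divide_le_eq)
  qed
  show "0 \<le> op_norm Nin Nout m n A" if n: "0 < n"
  proof -
    have d: "delta 0 \<in> cvec_space n" using delta_cvec n by simp
    have "delta 0 \<noteq> (\<lambda>_. 0)" by (metis delta_def zero_neq_one)
    hence Nd: "0 < Nin (delta 0)" using cnorm_zero_iff[OF Nin d] cnorm_nonneg[OF Nin d] by auto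
    define y where "y = (\<lambda>k. complex_of_real (1 / Nin (delta 0)) * delta 0 k)"
    have y1: "y \<in> cvec_space n" unfolding y_def by (rule cvec_scale[OF d])
    have "Nin y = cmod (complex_of_real (1 / Nin (delta 0))) * Nin (delta 0)" unfolding y_def by (rule cnorm_scale[OF Nin d])
    hence y: "y \<in> cvec_space n" "Nin y = 1" using y1 Nd by (auto simp: norm_divide)
    have "0 \<le> Nout (mat_app m n A y)" by (rule cnorm_nonneg[OF Nout mat_app_cvec])
    also have "\<dots> \<le> Sup T" by (rule cSup_upper[OF _ bdd]) (use y in \<open>auto simp: T_def\<close>)
    finally show ?thesis unfolding opT .
  qed
qed


lemma partB:
  assumes fin: "finite (dedges F)"
    and VF: "\<forall>e\<in>dedges F. 0 < r (snd e) \<and> is_cnorm (r (snd e)) (N (snd e))"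
  shows "rho_M F r u \<le> rho_M F (\<lambda>_. 1) (norm_weights N r u)"
proof -
  let ?E = "dedges F"
  let ?w = "norm_weights N r u"
  define opn where "opn e e' = op_norm (N (snd e')) (N (snd e)) (r (snd e)) (r (snd e')) (u (fst e) (snd e') (snd e))" for e e' :: "'a dedge"
  have cw: "coef ?w e e' = complex_of_real (opn e e')" for e e' by (simp add: coef_def norm_weights_def opn_def)
  have opn0: "0 \<le> opn e e'" if "e \<in> ?E" "e' \<in> ?E" for e e'
    unfolding opn_def using VF that by (intro op_norm_props(2)) auto
  have r0: "0 \<le> rho_M F (\<lambda>_. 1) ?w" by (rule rho_facts(1)[OF fin])
  show ?thesis unfolding rho_M_def[of F r u] spectral_radius_op_def
  proof (rule cSup_least)
    fix x assume "x \<in> insert 0 (cmod ` {c. is_eigenvalue (dspace F r) (M_op F r u) c})"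
    then consider "x = 0" | c where "x = cmod c" "is_eigenvalue (dspace F r) (M_op F r u) c"
      by auto
    then show "x \<le> rho_M F (\<lambda>_. 1) ?w"
    proof cases
      case 1 then show ?thesis using r0 by simp
    next
      case 2
      obtain f where f: "f \<in> dspace F r" "f \<noteq> (\<lambda>_ _. 0)" "M_op F r u f = (\<lambda>e k. c * f e k)"
        using 2(2) unfolding is_eigenvalue_def by blast
      have fc: "f e \<in> cvec_space (r (snd e))" for e
        unfolding cvec_space_def using dspace_zero[OF f(1), of e] by auto
      obtain e0 k0 where nz: "f e0 k0 \<noteq> 0" using f(2) by blast
      have e0: "e0 \<in> ?E" using dspace_zero[OF f(1), of e0 k0] nz by auto
      have f0: "f e0 \<noteq> (\<lambda>_. 0)" using nz by metis
      define g where "g e = N (snd e) (f e)" for e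
      have g0: "\<forall>e\<in>?E. 0 \<le> g e" unfolding g_def using VF fc cnorm_nonneg by blast
      have ge0: "0 < g e0"
      proof -
        have Ne0: "is_cnorm (r (snd e0)) (N (snd e0))" using VF e0 by auto
        have "N (snd e0) (f e0) \<noteq> 0" using cnorm_zero_iff[OF Ne0 fc[of e0]] f0 by simp
        moreover have "0 \<le> N (snd e0) (f e0)" by (rule cnorm_nonneg[OF Ne0 fc])
        ultimately show ?thesis unfolding g_def by simp
      qed
      have ineq: "cmod c * g e \<le> (\<Sum>e'\<in>{e'\<in>?E. arc e' e}. Re (coef ?w e e') * g e')" if e: "e \<in> ?E" for e
      proof -
        have Ne: "is_cnorm (r (snd e)) (N (snd e))" using VF e by auto
        have "M_op F r u f e = (\<lambda>k. c * f e k)" using fun_cong[OF f(3), of e] by simp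
        hence eq: "(\<lambda>k. c * f e k) = (\<lambda>k. \<Sum>e'\<in>{e'\<in>?E. arc e' e}. mat_app (r (snd e)) (r (snd e')) (u (fst e) (snd e') (snd e)) (f e') k)"
          using e unfolding M_op_def by (auto simp: fun_eq_iff)
        have "cmod c * g e = N (snd e) (\<lambda>k. c * f e k)" unfolding g_def using cnorm_scale[OF Ne fc] by simp
        also have "\<dots> \<le> (\<Sum>e'\<in>{e'\<in>?E. arc e' e}. N (snd e) (mat_app (r (snd e)) (r (snd e')) (u (fst e) (snd e') (snd e)) (f e')))"
          unfolding eq by (rule cnorm_sum[OF Ne]) (use fin mat_app_cvec in auto)
        also have "\<dots> \<le> (\<Sum>e'\<in>{e'\<in>?E. arc e' e}. opn e e' * g e')"
        proof (rule sum_mono)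
          fix e' assume e': "e' \<in> {e'\<in>?E. arc e' e}"
          have Ne': "is_cnorm (r (snd e')) (N (snd e'))" using VF e' by auto
          show "N (snd e) (mat_app (r (snd e)) (r (snd e')) (u (fst e) (snd e') (snd e)) (f e')) \<le> opn e e' * g e'"
            unfolding opn_def g_def by (rule op_norm_props(1)[OF Ne' Ne fc])
        qed
        also have "\<dots> = (\<Sum>e'\<in>{e'\<in>?E. arc e' e}. Re (coef ?w e e') * g e')" by (simp add: cw)
        finally show ?thesis .
      qed
      show ?thesis
      proof (cases "c = 0")
        case True then show ?thesis using 2 r0 by simp
      next
        case False
        have "cmod c \<le> rho_M F (\<lambda>_. 1) ?w"
        proof (rule KL[OF fin _ g0 e0 ge0])
          show "\<forall>e\<in>?E. \<forall>e'\<in>?E. arc e' e \<longrightarrow> Im (coef ?w e e') = 0 \<and> 0 \<le> Re (coef ?w e e')"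
            using opn0 by (simp add: cw)
          show "0 < cmod c" using False by simp
          show "\<forall>e\<in>?E. cmod c * g e \<le> (\<Sum>e'\<in>{e'\<in>?E. arc e' e}. Re (coef ?w e e') * g e')"
            using ineq by blast
        qed
        then show ?thesis using 2 by simp
      qed
    qed
  qed simp
qed

theorem proposition1:
  fixes V :: "'v set" and F :: "'v set set" and r :: "'v \<Rightarrow> nat"
    and u :: "'v set \<Rightarrow> 'v \<Rightarrow> 'v \<Rightarrow> nat \<Rightarrow> nat \<Rightarrow> complex"
    and N :: "'v \<Rightarrow> (nat \<Rightarrow> complex) \<Rightarrow> real"
  assumes "finite V" and "\<forall>\<alpha>\<in>F. \<alpha> \<subseteq> V"
    and "\<forall>i\<in>V. 0 < r i"
    and "\<forall>i\<in>V. is_cnorm (r i) (N i)"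
  shows "rho_M F r u \<le> rho_M F (\<lambda>_. 1) (norm_weights N r u)
    \<and> rho_M F (\<lambda>_. 1) (norm_weights N r u)
        \<le> Max (insert 0 {op_norm (N i) (N j) (r j) (r i) (u \<alpha> i j) | \<alpha> i j. \<alpha> \<in> F \<and> i \<in> \<alpha> \<and> j \<in> \<alpha> \<and> i \<noteq> j})
          * rho_M F (\<lambda>_. 1) (\<lambda>_ _ _ _ _. 1)"
proof -
  have FP: "F \<subseteq> Pow V" using assms(2) by auto
  have finF: "finite F" using finite_subset[OF FP] assms(1) by auto
  have sub: "dedges F \<subseteq> F \<times> V" using assms(2) by (auto simp: dedges_def)
  have fin: "finite (dedges F)" using finite_subset[OF sub] finF assms(1) by auto
  have sndV: "snd e \<in> V" if "e \<in> dedges F" for e using sub that by auto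
  have VF: "\<forall>e\<in>dedges F. 0 < r (snd e) \<and> is_cnorm (r (snd e)) (N (snd e))"
    using sndV assms(3,4) by auto
  define Sset where "Sset = {op_norm (N i) (N j) (r j) (r i) (u \<alpha> i j) | \<alpha> i j. \<alpha> \<in> F \<and> i \<in> \<alpha> \<and> j \<in> \<alpha> \<and> i \<noteq> j}"
  define W where "W = Max (insert 0 Sset)"
  have SsetSub: "Sset \<subseteq> (\<lambda>(\<alpha>, i, j). op_norm (N i) (N j) (r j) (r i) (u \<alpha> i j)) ` (F \<times> V \<times> V)"
  proof (rule subsetI)
    fix x assume "x \<in> Sset"
    then obtain \<alpha> i j where h: "x = op_norm (N i) (N j) (r j) (r i) (u \<alpha> i j)" "\<alpha> \<in> F" "i \<in> \<alpha>" "j \<in> \<alpha>"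
      unfolding Sset_def by blast
    have "(\<alpha>, i, j) \<in> F \<times> V \<times> V" using assms(2) h by blast
    then show "x \<in> (\<lambda>(\<alpha>, i, j). op_norm (N i) (N j) (r j) (r i) (u \<alpha> i j)) ` (F \<times> V \<times> V)"
      by (rule image_eqI[rotated]) (simp add: h(1))
  qed
  have finS: "finite (insert 0 Sset)"
  proof -
    have "finite (F \<times> V \<times> V)" using finF assms(1) by simp
    hence "finite ((\<lambda>(\<alpha>, i, j). op_norm (N i) (N j) (r j) (r i) (u \<alpha> i j)) ` (F \<times> V \<times> V))"
      by (rule finite_imageI)
    hence "finite Sset" using SsetSub by (rule finite_subset[rotated])
    thus ?thesis by simp
  qed
  have W0: "0 \<le> W" unfolding W_def using finS by (intro Max_ge) auto
  have WS: "x \<in> Sset \<Longrightarrow> x \<le> W" for x unfolding W_def using finS by (intro Max_ge) auto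
  have part2: "rho_M F (\<lambda>_. 1) (norm_weights N r u) \<le> W * rho_M F (\<lambda>_. 1) (\<lambda>_ _ _ _ _. 1)"
  proof (rule partC[OF fin _ W0], intro ballI impI)
    fix e e' assume e: "e \<in> dedges F" and e': "e' \<in> dedges F" and a: "arc e' e"
    let ?o = "op_norm (N (snd e')) (N (snd e)) (r (snd e)) (r (snd e')) (u (fst e) (snd e') (snd e))"
    have c: "coef (norm_weights N r u) e e' = complex_of_real ?o" by (simp add: coef_def norm_weights_def)
    have "0 \<le> ?o" using VF e e' by (intro op_norm_props(2)) auto
    moreover have "?o \<in> Sset"
    proof -
      obtain \<alpha> j where ej: "e = (\<alpha>, j)" by (cases e)
      obtain \<beta> i where ei: "e' = (\<beta>, i)" by (cases e')
      have h: "\<alpha> \<in> F" "j \<in> \<alpha>" "i \<in> \<alpha>" "i \<noteq> j"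
        using e a unfolding ej ei dedges_def arc_def by auto
      show ?thesis unfolding Sset_def mem_Collect_eq ej ei fst_conv snd_conv
        by (intro exI[of _ \<alpha>] exI[of _ i] exI[of _ j]) (simp add: h)
    qed
    ultimately show "Im (coef (norm_weights N r u) e e') = 0 \<and> 0 \<le> Re (coef (norm_weights N r u) e e') \<and>
       Re (coef (norm_weights N r u) e e') \<le> W" using WS c by simp
  qed
  show ?thesis using partB[OF fin VF, of u] part2 unfolding W_def Sset_def by simp
qed

end
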